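(* Let $p$ be a prime, $n$ a positive integer, $s\ge 0$ an integer, and $d$ a positive integer with $\gcd(d,p^n-1)=1$. Let $F:\mathbb{F}_{p^n}\to\mathbb{F}_{p^n}$, $F(x)=x^d$. Suppose the cross-correlation function $\theta(\tau)$, $0\le\tau\le p^n-2$, of the $p$-ary $m$-sequences $u$ and $v$ that differ by decimation $d$ takes exactly the three values $-1$, $-1+p^{(n+s)/2}$ and $-1-p^{(n+s)/2}$. Then $F$ is a vectorial $s$-plateaued function, i.e. $|\widehat{F_b}(a)|\in\{0,p^{(n+s)/2}\}$ for all $b\in\mathbb{F}_{p^n}^*$ and $a\in\mathbb{F}_{p^n}$.
   Context: $\zeta_p=e^{2\pi i/p}$, $Tr_n(z)=\sum_{i=0}^{n-1}z^{p^i}$. Let $\sigma$ be a primitive element of $\mathbb{F}_{p^n}$; the $m$-sequence is $u(t)=Tr_n(\sigma^t)$ and its decimation is $v(t)=u(dt)$; the cross-correlation is $\theta(\tau)=\sum_{t=0}^{p^n-2}\zeta_p^{u(t+\tau)-v(t)}$. For $b\in\mathbb{F}_{p^n}^*$, $F_b(x)=Tr_n(bF(x))$ and $\widehat{F_b}(a)=\sum_{x\in\mathbb{F}_{p^n}}\zeta_p^{F_b(x)-Tr_n(ax)}$. *)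

theory Defs
  imports Complex_Main "HOL-Computational_Algebra.Primes"
begin

definition tr :: "nat \<Rightarrow> nat \<Rightarrow> 'a::field \<Rightarrow> 'a" where
  "tr p n z = (\<Sum>i<n. z ^ (p ^ i))"

text \<open>The trace lies in the prime field F_p; identify it with its representative in {0..p-1}.\<close>
definition trval :: "nat \<Rightarrow> nat \<Rightarrow> 'a::field \<Rightarrow> int" where
  "trval p n z = (THE k. 0 \<le> k \<and> k < int p \<and> of_int k = tr p n z)"

definition zeta :: "nat \<Rightarrow> int \<Rightarrow> complex" where
  "zeta p k = exp (2 * pi * \<i> * of_int k / of_nat p)"

definition primitive_element :: "'a::field \<Rightarrow> bool" where
  "primitive_element \<sigma> \<longleftrightarrow> \<sigma> \<noteq> 0 \<and> (\<forall>x. x \<noteq> 0 \<longrightarrow> (\<exists>t::nat. x = \<sigma> ^ t))"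

definition mseq :: "nat \<Rightarrow> nat \<Rightarrow> 'a::field \<Rightarrow> nat \<Rightarrow> int" where
  "mseq p n \<sigma> t = trval p n (\<sigma> ^ t)"

definition crosscorr :: "nat \<Rightarrow> nat \<Rightarrow> 'a::field \<Rightarrow> nat \<Rightarrow> nat \<Rightarrow> complex" where
  "crosscorr p n \<sigma> d \<tau> = (\<Sum>t<p ^ n - 1. zeta p (mseq p n \<sigma> (t + \<tau>) - mseq p n \<sigma> (d * t)))"

definition walsh :: "nat \<Rightarrow> nat \<Rightarrow> nat \<Rightarrow> 'a::{field,finite} \<Rightarrow> 'a \<Rightarrow> complex" where
  "walsh p n d b a = (\<Sum>x\<in>UNIV. zeta p (trval p n (b * x ^ d) - trval p n (a * x)))"

end

theory Submission
  imports Defs "HOL-Number_Theory.Residues" "HOL-Computational_Algebra.Polynomial"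
begin


lemma char_eq:
  assumes "prime p" "card (UNIV :: 'a::{field,finite} set) = p ^ n"
  shows "CHAR('a) = p"
proof -
  have pos: "CHAR('a) > 0" by (simp add: finite_imp_CHAR_pos)
  have pr: "prime CHAR('a)" using pos prime_CHAR_semidom by blast
  have "CHAR('a) dvd p ^ n" using CHAR_dvd_CARD[where 'a='a] assms(2) by simp
  hence "CHAR('a) dvd p" using pr prime_dvd_power by blast
  thus ?thesis using pr assms(1) by (simp add: primes_dvd_imp_eq)
qed

lemma power_card_eq:
  fixes x :: "'a::{field,finite}"
  shows "x ^ card (UNIV :: 'a set) = x"
proof (cases "x = 0")
  case False
  have "x * (\<Prod>y\<in>UNIV-{0}. x * y) = x * x ^ (card (UNIV :: 'a set) - 1) * \<Prod>(UNIV-{0})"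
    by (simp add: prod.distrib mult_ac)
  also have "x * x ^ (card (UNIV :: 'a set) - 1) = x ^ Suc (card (UNIV :: 'a set) - 1)"
    by (subst power_Suc) auto
  also have "Suc (card (UNIV :: 'a set) - 1) = card (UNIV :: 'a set)"
    using finite_UNIV_card_ge_0[where ?'a = 'a] by simp
  also have "(\<Prod>y\<in>UNIV-{0}. x * y) = (\<Prod>y\<in>UNIV-{0}. y)"
    by (rule prod.reindex_bij_witness[of _ "\<lambda>y. y / x" "\<lambda>y. x * y"]) (use False in auto)
  finally show ?thesis
    by simp
qed (use finite_UNIV_card_ge_0[where ?'a = 'a] in auto)

lemma power_card_minus1:
  fixes x :: "'a::{field,finite}"
  assumes "x \<noteq> 0"
  shows "x ^ (card (UNIV :: 'a set) - 1) = 1"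
proof -
  have c: "card (UNIV :: 'a set) = Suc (card (UNIV :: 'a set) - 1)"
    using finite_UNIV_card_ge_0[where ?'a = 'a] by simp
  have "x * x ^ (card (UNIV :: 'a set) - 1) = x * 1"
    using power_card_eq[of x] by (subst (asm) c) simp
  thus ?thesis using assms by simp
qed

lemma tr_add:
  fixes x y :: "'a::{field,finite}"
  assumes "CHAR('a) = p" "prime p"
  shows "tr p n (x + y) = tr p n x + tr p n y"
  unfolding tr_def
  by (simp add: sum.distrib freshmans_dream'[where 'a='a] assms)

lemma tr_pow:
  fixes x :: "'a::{field,finite}"
  assumes "CHAR('a) = p" "prime p" "card (UNIV :: 'a set) = p ^ n"
  shows "tr p n x ^ p = tr p n x"
proof -
  have "tr p n x ^ p = (\<Sum>i<n. (x ^ p ^ i) ^ p)"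
    unfolding tr_def by (rule freshmans_dream_sum) (use assms in auto)
  also have "\<dots> = (\<Sum>i<n. x ^ p ^ Suc i)"
    by (simp add: power_mult[symmetric] mult.commute)
  also have "\<dots> = (\<Sum>i\<in>Suc ` {..<n}. x ^ p ^ i)"
    by (simp add: sum.reindex)
  also have "Suc ` {..<n} = {1..n}" by (simp add: image_Suc_lessThan)
  also have "(\<Sum>i\<in>{1..n}. x ^ p ^ i) = (\<Sum>i<n. x ^ p ^ i)"
  proof (cases n)
    case 0 thus ?thesis by simp
  next
    case (Suc m)
    have "(\<Sum>i\<in>{1..n}. x ^ p ^ i) = (\<Sum>i\<in>{1..m}. x ^ p ^ i) + x ^ p ^ n"
      using Suc by simp
    also have "x ^ p ^ n = x" using power_card_eq[of x] assms(3) by simp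
    also have "(\<Sum>i<n. x ^ p ^ i) = (\<Sum>i\<in>{1..m}. x ^ p ^ i) + x"
      unfolding Suc lessThan_Suc_atMost using sum.atLeast_Suc_atMost[of 0 m "\<lambda>i. x ^ p ^ i"]
      by (simp add: atMost_atLeast0 add.commute)
    ultimately show ?thesis by simp
  qed
  finally show ?thesis unfolding tr_def .
qed



lemma of_nat_pow_char:
  assumes "CHAR('a::{field,finite}) = p" "prime p"
  shows "(of_nat k :: 'a) ^ p = of_nat k"
proof (induction k)
  case 0 thus ?case using assms prime_gt_0_nat by (simp add: power_0_left)
next
  case (Suc k)
  have "(of_nat (Suc k) :: 'a) ^ p = (of_nat k + 1) ^ p" by (simp add: add.commute)
  also have "\<dots> = of_nat k ^ p + 1 ^ p" by (rule freshmans_dream) (use assms in auto)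
  finally show ?case using Suc by simp
qed

lemma frob_fixed:
  fixes z :: "'a::{field,finite}"
  assumes "CHAR('a) = p" "prime p" "z ^ p = z"
  shows "\<exists>k. 0 \<le> k \<and> k < int p \<and> of_int k = z"
proof (rule ccontr)
  assume nz: "\<not> ?thesis"
  define S where "S = (of_nat :: nat \<Rightarrow> 'a) ` {..<p}"
  have inj: "inj_on (of_nat :: nat \<Rightarrow> 'a) {..<p}"
  proof (rule inj_onI)
    fix a b assume "a \<in> {..<p}" "b \<in> {..<p}" "(of_nat a :: 'a) = of_nat b"
    thus "a = b" using assms(1) by (auto simp: of_nat_eq_iff_cong_CHAR cong_def)
  qed
  have cS: "card S = p" unfolding S_def using card_image[OF inj] by simp
  have zS: "z \<notin> S"
  proof
    assume "z \<in> S"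
    then obtain k where "k < p" "z = of_nat k" unfolding S_def by auto
    hence "0 \<le> int k \<and> int k < int p \<and> of_int (int k) = z" by simp
    thus False using nz by blast
  qed
  define Q :: "'a poly" where "Q = monom 1 p + [:0, -1:]"
  have p2: "p \<ge> 2" using assms(2) prime_ge_2_nat by blast
  have dQ: "degree Q = p" unfolding Q_def using p2
    by (subst degree_add_eq_left) (auto simp: degree_monom_eq)
  have Q0: "Q \<noteq> 0" using dQ p2 by auto
  have rootQ: "poly Q x = x ^ p - x" for x unfolding Q_def by (simp add: poly_monom)
  have "insert z S \<subseteq> {x. poly Q x = 0}"
    unfolding S_def using assms(3) of_nat_pow_char[OF assms(1,2)] by (auto simp: rootQ)
  hence "card (insert z S) \<le> card {x. poly Q x = 0}" by (rule card_mono[rotated]) simp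
  also have "\<dots> \<le> p" using card_poly_roots_bound[OF Q0] dQ by simp
  moreover have "finite S" unfolding S_def by simp
  hence "card (insert z S) = Suc p" using zS cS by simp
  ultimately show False by simp
qed

lemma trval_props:
  fixes z :: "'a::{field,finite}"
  assumes "CHAR('a) = p" "prime p" "card (UNIV :: 'a set) = p ^ n"
  shows "0 \<le> trval p n z \<and> trval p n z < int p \<and> of_int (trval p n z) = tr p n z"
proof -
  obtain k where k: "0 \<le> k" "k < int p" "of_int k = tr p n z"
    using frob_fixed[OF assms(1,2) tr_pow[OF assms]] by blast
  have uniq: "j = k" if "0 \<le> j" "j < int p" "of_int j = tr p n z" for j
  proof -
    have "(of_int j :: 'a) = of_int k" using that k by simp
    hence "[j = k] (mod int p)" using assms(1) by (simp add: of_int_eq_iff_cong_CHAR)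
    hence "j mod int p = k mod int p" by (simp add: cong_def)
    moreover have "j mod int p = j" using that by (intro mod_pos_pos_trivial) auto
    moreover have "k mod int p = k" using k by (intro mod_pos_pos_trivial) auto
    ultimately show ?thesis by simp
  qed
  have "trval p n z = k" unfolding trval_def
  proof (rule the_equality)
    show "0 \<le> k \<and> k < int p \<and> of_int k = tr p n z" using k by blast
  next
    fix j assume "0 \<le> j \<and> j < int p \<and> (of_int j :: 'a) = tr p n z"
    thus "j = k" using uniq by blast
  qed
  thus ?thesis using k by simp
qed

lemma zeta_add: "zeta p (a + b) = zeta p a * zeta p b"
  unfolding zeta_def by (simp add: exp_add[symmetric] add_divide_distrib distrib_left)

lemma zeta_multiple: "p > 0 \<Longrightarrow> zeta p (int p * m) = 1"
proof -
  assume "p > 0"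
  have "zeta p (int p * m) = exp (\<i> * complex_of_real (2 * pi * of_int m))"
    unfolding zeta_def using \<open>p > 0\<close> by (simp add: field_simps)
  also have "\<dots> = cis (2 * pi * of_int m)" by (simp add: cis_conv_exp)
  also have "\<dots> = 1" by (simp add: cis_multiple_2pi)
  finally show ?thesis .
qed

lemma zeta_cong: "p > 0 \<Longrightarrow> [a = b] (mod int p) \<Longrightarrow> zeta p a = zeta p b"
proof -
  assume "p > 0" "[a = b] (mod int p)"
  then obtain m where "a = b + int p * m"
    by (metis cong_iff_lin cong_sym)
  thus ?thesis using zeta_add[of p b "int p * m"] zeta_multiple[OF \<open>p > 0\<close>] by simp
qed

lemma zeta_eq1: "p > 0 \<Longrightarrow> zeta p a = 1 \<Longrightarrow> int p dvd a"
proof -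
  assume p: "p > 0" and z: "zeta p a = 1"
  have "zeta p a = cis (2 * pi * of_int a / real p)"
    unfolding zeta_def by (simp add: cis_conv_exp mult_ac)
  hence "cos (2 * pi * of_int a / real p) = 1" using z by (metis cis.sel(1) one_complex.sel(1))
  then obtain m :: int where "2 * pi * of_int a / real p = of_int m * 2 * pi"
    using cos_one_2pi_int by blast
  hence "real_of_int a = of_int m * real p" using p by (simp add: field_simps)
  hence "a = m * int p" by (metis of_int_eq_iff of_int_mult of_int_of_nat_eq)
  thus ?thesis by simp
qed

lemma zeta_0 [simp]: "zeta p 0 = 1" unfolding zeta_def by simp

lemma zeta_cis: "zeta p a = cis (2 * pi * of_int a / real p)"
  unfolding zeta_def by (simp add: cis_conv_exp mult_ac)

lemma zeta_cnj: "cnj (zeta p a) = zeta p (- a)"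
  unfolding zeta_cis cis_cnj by simp



lemma tr_zero: "p > 0 \<Longrightarrow> tr p n (0::'a::field) = 0"
  unfolding tr_def by (simp add: power_0_left)

lemma tr_neg:
  fixes x :: "'a::{field,finite}"
  assumes "CHAR('a) = p" "prime p"
  shows "tr p n (- x) = - tr p n x"
proof -
  have "tr p n (x + - x) = tr p n x + tr p n (- x)" by (rule tr_add[OF assms])
  moreover have "tr p n (0::'a) = 0" using tr_zero[of p n] prime_gt_0_nat[OF assms(2)] by simp
  ultimately have "tr p n x + tr p n (- x) = 0" by simp
  thus ?thesis by (simp add: eq_neg_iff_add_eq_0 add.commute)
qed

lemma tr_diff:
  fixes x y :: "'a::{field,finite}"
  assumes "CHAR('a) = p" "prime p"
  shows "tr p n (x - y) = tr p n x - tr p n y"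
  using tr_add[OF assms, where x=x and y="- y"] tr_neg[OF assms, where x=y] by simp

lemma zeta_trval_cong:
  fixes y :: "'a::{field,finite}"
  assumes "CHAR('a) = p" "prime p" "card (UNIV :: 'a set) = p ^ n"
    and "of_int k = tr p n y"
  shows "zeta p k = zeta p (trval p n y)"
proof -
  have "(of_int k :: 'a) = of_int (trval p n y)" using trval_props[OF assms(1-3), of y] assms(4) by simp
  hence "[k = trval p n y] (mod int p)" using assms(1) by (simp add: of_int_eq_iff_cong_CHAR)
  thus ?thesis using zeta_cong assms(2) prime_gt_0_nat by blast
qed

lemma Z_diff:
  fixes x y :: "'a::{field,finite}"
  assumes "CHAR('a) = p" "prime p" "card (UNIV :: 'a set) = p ^ n"
  shows "zeta p (trval p n x - trval p n y) = zeta p (trval p n (x - y))"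
  by (rule zeta_trval_cong[OF assms])
     (simp add: tr_diff[OF assms(1,2)] trval_props[OF assms])

lemma Z_add:
  fixes x y :: "'a::{field,finite}"
  assumes "CHAR('a) = p" "prime p" "card (UNIV :: 'a set) = p ^ n"
  shows "zeta p (trval p n (x + y)) = zeta p (trval p n x) * zeta p (trval p n y)"
proof -
  have "zeta p (trval p n x + trval p n y) = zeta p (trval p n (x + y))"
    by (rule zeta_trval_cong[OF assms])
       (simp add: tr_add[OF assms(1,2)] trval_props[OF assms])
  thus ?thesis by (simp add: zeta_add)
qed

lemma Z_neg:
  fixes x :: "'a::{field,finite}"
  assumes "CHAR('a) = p" "prime p" "card (UNIV :: 'a set) = p ^ n"
  shows "zeta p (trval p n (- x)) = cnj (zeta p (trval p n x))"
proof -
  have "zeta p (- trval p n x) = zeta p (trval p n (- x))"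
    by (rule zeta_trval_cong[OF assms])
       (simp add: tr_neg[OF assms(1,2)] trval_props[OF assms])
  thus ?thesis by (simp add: zeta_cnj)
qed

lemma Z_zero:
  assumes "CHAR('a::{field,finite}) = p" "prime p" "card (UNIV :: 'a set) = p ^ n"
  shows "zeta p (trval p n (0::'a)) = 1"
proof -
  have "zeta p 0 = zeta p (trval p n (0::'a))"
    by (rule zeta_trval_cong[OF assms]) (use tr_zero[of p n] prime_gt_0_nat[OF assms(2)] in simp)
  thus ?thesis by simp
qed

lemma char_sum_zero:
  fixes y0 :: "'a::{field,finite}"
  assumes "CHAR('a) = p" "prime p" "card (UNIV :: 'a set) = p ^ n"
    and "zeta p (trval p n y0) \<noteq> 1"
  shows "(\<Sum>y\<in>UNIV. zeta p (trval p n (y::'a))) = 0"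
proof -
  let ?S = "\<Sum>y\<in>UNIV. zeta p (trval p n (y::'a))"
  have "?S = (\<Sum>y\<in>UNIV. zeta p (trval p n (y + y0)))"
    by (rule sum.reindex_bij_witness[of _ "\<lambda>y. y + y0" "\<lambda>y. y - y0"]) auto
  also have "\<dots> = ?S * zeta p (trval p n y0)"
    by (simp add: Z_add[OF assms(1-3)] sum_distrib_right)
  finally have "?S * (1 - zeta p (trval p n y0)) = 0" by (simp add: algebra_simps)
  thus ?thesis using assms(4) by simp
qed



lemma pow_mod_q:
  fixes x :: "'a::{field,finite}"
  assumes "x \<noteq> 0"
  shows "x ^ m = x ^ (m mod (card (UNIV :: 'a set) - 1))"
proof -
  let ?q = "card (UNIV :: 'a set) - 1"
  have "x ^ m = x ^ (?q * (m div ?q) + m mod ?q)" by simp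
  also have "\<dots> = (x ^ ?q) ^ (m div ?q) * x ^ (m mod ?q)" by (simp only: power_add power_mult)
  also have "\<dots> = x ^ (m mod ?q)" using power_card_minus1[OF assms] by simp
  finally show ?thesis .
qed

lemma prim_bij:
  fixes \<sigma> :: "'a::{field,finite}"
  assumes "primitive_element \<sigma>"
  shows "bij_betw (\<lambda>t. \<sigma> ^ t) {..<card (UNIV :: 'a set) - 1} (UNIV - {0})"
proof -
  let ?q = "card (UNIV :: 'a set) - 1"
  have s0: "\<sigma> \<noteq> 0" using assms unfolding primitive_element_def by blast
  have c2: "card (UNIV :: 'a set) \<ge> 2"
  proof -
    have "{0::'a, 1} \<subseteq> UNIV" by simp
    hence "card {0::'a, 1} \<le> card (UNIV :: 'a set)" by (intro card_mono) auto
    thus ?thesis by simp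
  qed
  have img: "(\<lambda>t. \<sigma> ^ t) ` {..<?q} = UNIV - {0}"
  proof
    show "(\<lambda>t. \<sigma> ^ t) ` {..<?q} \<subseteq> UNIV - {0}" using s0 by auto
  next
    show "UNIV - {0} \<subseteq> (\<lambda>t. \<sigma> ^ t) ` {..<?q}"
    proof
      fix x :: 'a assume "x \<in> UNIV - {0}"
      then obtain t :: nat where t: "x = \<sigma> ^ t" using assms unfolding primitive_element_def by blast
      have "x = \<sigma> ^ (t mod ?q)" using t pow_mod_q[OF s0] by simp
      moreover have "t mod ?q < ?q" using c2 by simp
      ultimately show "x \<in> (\<lambda>t. \<sigma> ^ t) ` {..<?q}" by blast
    qed
  qed
  have "card (UNIV - {0::'a}) = ?q" by (simp add: card_Diff_singleton)
  hence "inj_on (\<lambda>t. \<sigma> ^ t) {..<?q}" using img by (intro eq_card_imp_inj_on) auto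
  thus ?thesis using img unfolding bij_betw_def by blast
qed

lemma power_d_inv:
  assumes "coprime d (card (UNIV :: 'a::{field,finite} set) - 1)" "d > 0"
  shows "\<exists>e. \<forall>x::'a. (x ^ d) ^ e = x \<and> (x ^ e) ^ d = x"
proof -
  let ?q = "card (UNIV :: 'a set) - 1"
  obtain e0 where e0: "[d * e0 = Suc 0] (mod ?q)" using cong_solve_coprime_nat[OF assms(1)] by blast
  define e where "e = e0 + ?q"
  have c2: "card (UNIV :: 'a set) \<ge> 2"
  proof -
    have "{0::'a, 1} \<subseteq> UNIV" by simp
    hence "card {0::'a, 1} \<le> card (UNIV :: 'a set)" by (intro card_mono) auto
    thus ?thesis by simp
  qed
  have epos: "e > 0" unfolding e_def using c2 by simp
  have de: "(d * e) mod ?q = 1 mod ?q"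
  proof -
    have "d * e = d * e0 + ?q * d" unfolding e_def by (simp add: algebra_simps)
    hence "(d * e) mod ?q = (d * e0) mod ?q" by simp
    thus ?thesis using e0 by (simp add: cong_def)
  qed
  have key: "x ^ (d * e) = x" for x :: 'a
  proof (cases "x = 0")
    case True thus ?thesis using epos assms(2) by simp
  next
    case False
    have "x ^ (d * e) = x ^ ((d * e) mod ?q)" by (rule pow_mod_q[OF False])
    also have "\<dots> = x ^ (1 mod ?q)" using de by simp
    also have "\<dots> = x ^ 1" using pow_mod_q[OF False, of 1] by simp
    finally show ?thesis by simp
  qed
  show ?thesis
    by (intro exI[of _ e] allI conjI)
       (simp_all add: power_mult[symmetric] key mult.commute[of e d])
qed



theorem mainTheorem3:
  fixes \<sigma> :: "'a::{field,finite}" and p n s d :: nat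
  assumes "prime p" and "n > 0" and "card (UNIV :: 'a set) = p ^ n"
    and "d > 0" and "coprime d (p ^ n - 1)"
    and "primitive_element \<sigma>"
    and "crosscorr p n \<sigma> d ` {0 .. p ^ n - 2} =
         {-1, -1 + complex_of_real (real p powr (real (n + s) / 2)),
              -1 - complex_of_real (real p powr (real (n + s) / 2))}"
  shows "\<forall>b a. b \<noteq> (0::'a) \<longrightarrow>
           cmod (walsh p n d b a) \<in> {0, real p powr (real (n + s) / 2)}"
proof -
  note pr = assms(1)
  note cd = assms(3)
  have ch: "CHAR('a) = p" by (rule char_eq[OF pr cd])
  note H = ch pr cd
  define q where "q = p ^ n - 1"
  define P where "P = real p powr (real (n + s) / 2)"
  define Z where "Z = (\<lambda>y::'a. zeta p (trval p n y))"
  have cq: "card (UNIV :: 'a set) - 1 = q" unfolding q_def cd ..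
  have p2: "p ^ n \<ge> 2"
  proof -
    have "p ^ n \<ge> p ^ 1" using prime_gt_0_nat[OF pr] assms(2) by (intro power_increasing) auto
    thus ?thesis using prime_ge_2_nat[OF pr] by simp
  qed
  have Zd: "zeta p (trval p n x - trval p n y) = Z (x - y)" for x y :: 'a
    unfolding Z_def by (rule Z_diff[OF H])
  have Zadd: "Z (x + y) = Z x * Z y" for x y :: 'a
    unfolding Z_def by (rule Z_add[OF H])
  have Zneg: "Z (- x) = cnj (Z x)" for x :: 'a
    unfolding Z_def by (rule Z_neg[OF H])
  have Z0: "Z 0 = 1" unfolding Z_def by (rule Z_zero[OF H])
  have bij: "bij_betw (\<lambda>t. \<sigma> ^ t) {..<q} (UNIV - {0})"
    using prim_bij[OF assms(6)] cq by simp
  obtain e where e: "\<And>x::'a. (x ^ d) ^ e = x" "\<And>x::'a. (x ^ e) ^ d = x"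
    using power_d_inv[of d, where 'a='a] assms(4,5) cq q_def by auto
  have theta: "crosscorr p n \<sigma> d \<tau> = (\<Sum>y\<in>UNIV - {0}. Z (y * \<sigma> ^ \<tau> - y ^ d))" for \<tau>
  proof -
    have "crosscorr p n \<sigma> d \<tau> = (\<Sum>t<q. Z (\<sigma> ^ t * \<sigma> ^ \<tau> - (\<sigma> ^ t) ^ d))"
      unfolding crosscorr_def mseq_def q_def[symmetric] Zd
      by (simp add: power_add power_mult mult.commute[of d])
    also have "\<dots> = (\<Sum>y\<in>UNIV - {0}. Z (y * \<sigma> ^ \<tau> - y ^ d))"
      by (rule sum.reindex_bij_betw[OF bij])
    finally show ?thesis .
  qed
  have W: "(\<Sum>y\<in>UNIV. Z (y * c - y ^ d)) = 1 + (\<Sum>y\<in>UNIV - {0}. Z (y * c - y ^ d))" for c :: 'a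
  proof -
    have "(\<Sum>y\<in>UNIV. Z (y * c - y ^ d)) = Z (0 * c - 0 ^ d) + (\<Sum>y\<in>UNIV - {0}. Z (y * c - y ^ d))"
      by (rule sum.remove) auto
    thus ?thesis using Z0 assms(4) by (simp add: power_0_left)
  qed
  have "\<exists>y0. Z y0 \<noteq> 1"
  proof (rule ccontr)
    assume "\<not> (\<exists>y0. Z y0 \<noteq> 1)"
    hence all1: "Z y = 1" for y by blast
    have "-1 \<in> crosscorr p n \<sigma> d ` {0 .. p ^ n - 2}" using assms(7) by simp
    then obtain \<tau> where "crosscorr p n \<sigma> d \<tau> = -1" by (metis imageE)
    moreover have "crosscorr p n \<sigma> d \<tau> = of_nat q"
      unfolding theta all1 using cq by (simp add: card_Diff_singleton)
    ultimately show False by (metis of_nat_0_le_iff of_nat_1 of_nat_add of_nat_eq_0_iff add_eq_0_iff_both_eq_0 one_neq_zero neg_eq_iff_add_eq_0)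
  qed
  then obtain y0 where y0: "Z y0 \<noteq> 1" by blast
  have sumZ: "(\<Sum>y\<in>UNIV. Z y) = 0"
    using char_sum_zero[OF H, of y0] y0 unfolding Z_def by simp
  show ?thesis
  proof (intro allI impI)
    fix b a :: 'a assume b0: "b \<noteq> 0"
    define \<beta> where "\<beta> = b ^ e"
    have bd: "\<beta> ^ d = b" unfolding \<beta>_def by (rule e(2))
    have beta0: "\<beta> \<noteq> 0" using bd b0 assms(4) by auto
    have wal: "walsh p n d b a = (\<Sum>x\<in>UNIV. Z (b * x ^ d - a * x))"
      unfolding walsh_def Zd ..
    have "cmod (walsh p n d b a) \<in> {0, P}"
    proof (cases "a = 0")
      case True
      have injd: "inj (\<lambda>x::'a. b * x ^ d)"
      proof (rule injI)
        fix x y :: 'a assume "b * x ^ d = b * y ^ d"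
        hence "x ^ d = y ^ d" using b0 by simp
        thus "x = y" using e(1) by metis
      qed
      hence "bij (\<lambda>x::'a. b * x ^ d)" using finite_UNIV_inj_surj[of "\<lambda>x::'a. b * x ^ d"]
        by (simp add: bij_def)
      hence "(\<Sum>x\<in>UNIV. Z (b * x ^ d)) = (\<Sum>y\<in>UNIV. Z y)"
        by (rule sum.reindex_bij_betw)
      hence "walsh p n d b a = 0" using wal True sumZ by simp
      thus ?thesis by simp
    next
      case False
      define c where "c = a / \<beta>"
      have c0: "c \<noteq> 0" using False beta0 unfolding c_def by simp
      have "walsh p n d b a = (\<Sum>y\<in>UNIV. Z (y ^ d - y * c))"
        unfolding wal
      proof (rule sum.reindex_bij_witness[of _ "\<lambda>y. y / \<beta>" "\<lambda>x. \<beta> * x"])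
        fix x :: 'a
        show "Z ((\<beta> * x) ^ d - (\<beta> * x) * c) = Z (b * x ^ d - a * x)"
          using beta0 bd unfolding c_def by (simp add: power_mult_distrib mult.commute[of x a])
      qed (use beta0 in auto)
      also have "\<dots> = cnj (\<Sum>y\<in>UNIV. Z (y * c - y ^ d))"
        by (simp add: Zneg[symmetric])
      finally have w1: "cmod (walsh p n d b a) = cmod (\<Sum>y\<in>UNIV. Z (y * c - y ^ d))" by (simp only: complex_mod_cnj)
      have "c \<in> (\<lambda>t. \<sigma> ^ t) ` {..<q}"
        using c0 bij_betw_imp_surj_on[OF bij] by blast
      then obtain \<tau> where tau: "\<tau> < q" "c = \<sigma> ^ \<tau>" by (auto elim!: imageE)
      have "\<tau> \<in> {0 .. p ^ n - 2}" using tau(1) unfolding q_def by simp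
      hence "crosscorr p n \<sigma> d \<tau> \<in> crosscorr p n \<sigma> d ` {0 .. p ^ n - 2}" by (rule imageI)
      hence th: "crosscorr p n \<sigma> d \<tau> \<in> {-1, -1 + complex_of_real P, -1 - complex_of_real P}"
        unfolding P_def using assms(7) by simp
      have sW: "(\<Sum>y\<in>UNIV. Z (y * c - y ^ d)) = 1 + crosscorr p n \<sigma> d \<tau>"
        unfolding W theta tau(2) ..
      have Pn: "P \<ge> 0" unfolding P_def by simp
      from th show ?thesis
      proof (elim insertE)
        assume "crosscorr p n \<sigma> d \<tau> = -1"
        hence "walsh p n d b a = 0 \<or> cmod (walsh p n d b a) = 0" using w1 sW by simp
        thus ?thesis by auto
      next
        assume "crosscorr p n \<sigma> d \<tau> = -1 + complex_of_real P"
        hence "cmod (walsh p n d b a) = P" using w1 sW Pn by simp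
        thus ?thesis by simp
      next
        assume "crosscorr p n \<sigma> d \<tau> = -1 - complex_of_real P"
        hence "cmod (walsh p n d b a) = P" using w1 sW Pn by simp
        thus ?thesis by simp
      qed simp
    qed
    thus "cmod (walsh p n d b a) \<in> {0, real p powr (real (n + s) / 2)}" unfolding P_def .
  qed
qed

end
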